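(* Let $X$ be a finite-dimensional real normed space and let $\{H(a_i^*,\alpha_i)\mid i\in S\}$ be a family of hyperplanes in $X$ indexed by a set $S$, where $a_i^*\in X^*\setminus\{0\}$, $\alpha_i\in\mathbb{R}$. For each (possibly empty) subset $I\subset S$ put $$D_I=\Big(\bigcap_{i\in I}\{x\mid a_i^*(x)\le\alpha_i\}\Big)\cap\Big(\bigcap_{i\in S\setminus I}\{x\mid a_i^*(x)\ge\alpha_i\}\Big).$$ Then for any subsets $I,J\subset S$ one has either $D_I=D_J$ or $\mathrm{ri}\,D_I\cap\mathrm{ri}\,D_J=\varnothing$.
   Context: $H(a^*,\alpha)=\{x\in X\mid a^*(x)=\alpha\}$. $\mathrm{ri}\,M$ denotes the relative interior of a convex set $M$ (its interior relative to its affine hull). *)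

theory Defs
  imports "HOL-Analysis.Analysis"
begin

definition cellD :: "'i set \<Rightarrow> ('i \<Rightarrow> 'a \<Rightarrow> real) \<Rightarrow> ('i \<Rightarrow> real) \<Rightarrow> 'i set \<Rightarrow> 'a set" where
  "cellD S a alpha I =
     (\<Inter>i\<in>I. {x. a i x \<le> alpha i}) \<inter> (\<Inter>i\<in>S - I. {x. a i x \<ge> alpha i})"

end

theory Submission
  imports Defs
begin

lemma ri_max_const:
  fixes C :: "'a::euclidean_space set"
  assumes lf: "linear f" and cv: "convex C" and z: "z \<in> rel_interior C"
    and le: "\<And>y. y \<in> C \<Longrightarrow> f y \<le> (c::real)" and fz: "f z = c" and y: "y \<in> C"
  shows "f y = c"
proof -
  have "y \<in> affine hull C" using hull_subset[of C affine] y by (rule subsetD)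
  then have "\<exists>e. e > 1 \<and> (1 - e) *\<^sub>R y + e *\<^sub>R z \<in> C"
    using convex_rel_interior_if2[OF cv z] by (rule bspec[rotated])
  then obtain e where e: "e > 1" "(1 - e) *\<^sub>R y + e *\<^sub>R z \<in> C"
    by blast
  have "f ((1 - e) *\<^sub>R y + e *\<^sub>R z) = (1 - e) * f y + e * c"
    using lf fz by (simp add: linear_add linear_scale)
  with le[OF e(2)] have "(1 - e) * (f y - c) \<le> 0" by (simp add: algebra_simps)
  then have "(e - 1) * (f y - c) \<ge> 0" by (simp add: algebra_simps)
  with e(1) have "f y - c \<ge> 0" by (simp add: zero_le_mult_iff)
  then have "f y \<ge> c" by simp
  with le[OF y] show ?thesis by simp
qed

lemma convex_cellD:
  assumes "\<And>i. i \<in> S \<Longrightarrow> bounded_linear (a i)" "I \<subseteq> S"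
  shows "convex (cellD S a alpha I)"
  unfolding cellD_def
proof (intro convex_Int convex_INT)
  fix i assume "i \<in> I"
  then have l: "linear (a i)" using assms bounded_linear.linear by blast
  have "{x. a i x \<le> alpha i} = a i -` {..alpha i}" by auto
  then show "convex {x. a i x \<le> alpha i}"
    using convex_linear_vimage[OF l, of "{..alpha i}"] by simp
next
  fix i assume "i \<in> S - I"
  then have l: "linear (a i)" using assms bounded_linear.linear by blast
  have "{x. a i x \<ge> alpha i} = a i -` {alpha i..}" by auto
  then show "convex {x. a i x \<ge> alpha i}"
    using convex_linear_vimage[OF l, of "{alpha i..}"] by simp
qed

theorem lemma3p1:
  fixes S :: "'i set"
    and a :: "'i \<Rightarrow> 'a::euclidean_space \<Rightarrow> real"
    and alpha :: "'i \<Rightarrow> real"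
    and I J :: "'i set"
  assumes "\<And>i. i \<in> S \<Longrightarrow> bounded_linear (a i)"
    and "\<And>i. i \<in> S \<Longrightarrow> a i \<noteq> (\<lambda>x. 0)"
    and "I \<subseteq> S" and "J \<subseteq> S"
  shows "cellD S a alpha I = cellD S a alpha J \<or>
         rel_interior (cellD S a alpha I) \<inter> rel_interior (cellD S a alpha J) = {}"
proof (rule disjCI)
  assume "rel_interior (cellD S a alpha I) \<inter> rel_interior (cellD S a alpha J) \<noteq> {}"
  then obtain z where zI: "z \<in> rel_interior (cellD S a alpha I)"
    and zJ: "z \<in> rel_interior (cellD S a alpha J)" by blast
  have cI: "convex (cellD S a alpha I)" using convex_cellD[OF assms(1) assms(3)] .
  have cJ: "convex (cellD S a alpha J)" using convex_cellD[OF assms(1) assms(4)] .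
  have zI': "z \<in> cellD S a alpha I" using zI rel_interior_subset by blast
  have zJ': "z \<in> cellD S a alpha J" using zJ rel_interior_subset by blast
  have key: "\<And>K L i y. K \<subseteq> S \<Longrightarrow> L \<subseteq> S \<Longrightarrow> z \<in> rel_interior (cellD S a alpha K) \<Longrightarrow>
      z \<in> rel_interior (cellD S a alpha L) \<Longrightarrow> i \<in> K \<Longrightarrow> i \<notin> L \<Longrightarrow>
      y \<in> cellD S a alpha K \<Longrightarrow> a i y = alpha i"
  proof -
    fix K L i y
    assume K: "K \<subseteq> S" and L: "L \<subseteq> S" and zK: "z \<in> rel_interior (cellD S a alpha K)"
      and zL: "z \<in> rel_interior (cellD S a alpha L)" and iK: "i \<in> K" and iL: "i \<notin> L"
      and y: "y \<in> cellD S a alpha K"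
    have "i \<in> S" using iK K by blast
    then have lin: "linear (a i)" using assms(1) bounded_linear.linear by blast
    have "z \<in> cellD S a alpha K" using zK rel_interior_subset by blast
    moreover have "z \<in> cellD S a alpha L" using zL rel_interior_subset by blast
    ultimately have "a i z \<le> alpha i" "a i z \<ge> alpha i" using iK iL K unfolding cellD_def by blast+
    then have "a i z = alpha i" by simp
    moreover have "\<And>y. y \<in> cellD S a alpha K \<Longrightarrow> a i y \<le> alpha i"
      using iK unfolding cellD_def by blast
    ultimately show "a i y = alpha i"
      using ri_max_const[OF lin convex_cellD[OF assms(1) K] zK] y by blast
  qed
  have sub: "\<And>K L. K \<subseteq> S \<Longrightarrow> L \<subseteq> S \<Longrightarrow> z \<in> rel_interior (cellD S a alpha K) \<Longrightarrow>
      z \<in> rel_interior (cellD S a alpha L) \<Longrightarrow> cellD S a alpha K \<subseteq> cellD S a alpha L"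
  proof
    fix K L y
    assume K: "K \<subseteq> S" and L: "L \<subseteq> S" and zK: "z \<in> rel_interior (cellD S a alpha K)"
      and zL: "z \<in> rel_interior (cellD S a alpha L)" and y: "y \<in> cellD S a alpha K"
    have A: "\<And>i. i \<in> K \<Longrightarrow> i \<notin> L \<Longrightarrow> a i y = alpha i"
      using key[OF K L zK zL] y by blast
    have B: "\<And>i. i \<in> L \<Longrightarrow> i \<notin> K \<Longrightarrow> a i y = alpha i"
    proof -
      fix i assume iL: "i \<in> L" and iK: "i \<notin> K"
      have "i \<in> S" using iL L by blast
      then have "linear (a i)" using assms(1) bounded_linear.linear by blast
      then have lin: "linear (\<lambda>x. - a i x)" by (rule linear_compose_neg)
      have "z \<in> cellD S a alpha K" using zK rel_interior_subset by blast
      moreover have "z \<in> cellD S a alpha L" using zL rel_interior_subset by blast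
      ultimately have "a i z \<le> alpha i" "a i z \<ge> alpha i" using iK iL L unfolding cellD_def by blast+
      then have "- a i z = - alpha i" by simp
      moreover have "\<And>y. y \<in> cellD S a alpha K \<Longrightarrow> - a i y \<le> - alpha i"
      proof -
        fix y assume "y \<in> cellD S a alpha K"
        moreover have "i \<in> S - K" using iK iL L by blast
        ultimately have "a i y \<ge> alpha i" unfolding cellD_def by blast
        then show "- a i y \<le> - alpha i" by simp
      qed
      ultimately have "- a i y = - alpha i"
        using ri_max_const[OF lin convex_cellD[OF assms(1) K] zK] y by blast
      then show "a i y = alpha i" by simp
    qed
    show "y \<in> cellD S a alpha L"
    proof -
      have y1: "\<And>i. i \<in> K \<Longrightarrow> a i y \<le> alpha i" and y2: "\<And>i. i \<in> S - K \<Longrightarrow> a i y \<ge> alpha i"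
        using y unfolding cellD_def by auto
      have "\<And>i. i \<in> L \<Longrightarrow> a i y \<le> alpha i"
      proof -
        fix i assume "i \<in> L"
        then show "a i y \<le> alpha i" using y1 B L by (cases "i \<in> K") auto
      qed
      moreover have "\<And>i. i \<in> S - L \<Longrightarrow> a i y \<ge> alpha i"
      proof -
        fix i assume "i \<in> S - L"
        then show "a i y \<ge> alpha i" using y2 A by (cases "i \<in> K") auto
      qed
      ultimately show ?thesis unfolding cellD_def by blast
    qed
  qed
  show "cellD S a alpha I = cellD S a alpha J"
    by (rule subset_antisym[OF sub[OF assms(3,4) zI zJ] sub[OF assms(4,3) zJ zI]])
qed

end
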